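(* Let $\Omega$ be a bounded strictly convex domain in $\mathbb{R}^n$ with smooth boundary and let $\phi\in C^2(\overline \Omega)$ satisfy $\phi>0$ in $\Omega$, $\phi|_{\partial\Omega}=0$ and $\frac{\partial\phi}{\partial \nu}|_{\partial\Omega}<0$, where $\nu$ is the unit outward normal of $\Omega$. Let $f=-\log\phi$. Then there are positive constants $\delta_0$ and $c_0$ such that $$\nabla^2f(x)(X,X)\geq \frac{c_0\|X\|^2}{\phi(x)}$$ for any $x\in \Omega$ with $\phi(x)<\delta_0$ and any $X\in \mathbb{R}^n$. *)

theory Defs
  imports "HOL-Analysis.Analysis"
begin

text \<open>Iterated directional (Frechet) derivatives:
  dirderivs f [u1,...,uk] x = D^k f(x)(u1,...,uk).
  In particular dirderivs f [X,X] x is the Hessian form of f at x applied to (X,X).\<close>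
fun dirderivs :: "('a::real_normed_vector \<Rightarrow> real) \<Rightarrow> 'a list \<Rightarrow> 'a \<Rightarrow> real" where
  "dirderivs f [] = f"
| "dirderivs f (u # us) = (\<lambda>x. frechet_derivative (dirderivs f us) (at x) u)"

definition smooth_fun :: "('a::real_normed_vector \<Rightarrow> real) \<Rightarrow> bool" where
  "smooth_fun f \<longleftrightarrow> (\<forall>us x. dirderivs f us differentiable (at x))"

definition grad :: "('a::euclidean_space \<Rightarrow> real) \<Rightarrow> 'a \<Rightarrow> 'a" where
  "grad f x = (\<Sum>b\<in>Basis. frechet_derivative f (at x) b *\<^sub>R b)"

text \<open>Omega = {rho < 0} is a bounded strictly convex domain with smooth boundary,
  rho being a smooth defining function: nonvanishing gradient on {rho = 0}, and
  the second fundamental form (Hessian of rho on the tangent space) positive definite.\<close>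
definition smooth_strictly_convex_domain :: "('a::euclidean_space \<Rightarrow> real) \<Rightarrow> 'a set \<Rightarrow> bool" where
  "smooth_strictly_convex_domain \<rho> \<Omega> \<longleftrightarrow>
     smooth_fun \<rho> \<and> \<Omega> = {x. \<rho> x < 0} \<and> \<Omega> \<noteq> {} \<and> bounded \<Omega> \<and> connected \<Omega> \<and>
     (\<forall>p. \<rho> p = 0 \<longrightarrow> grad \<rho> p \<noteq> 0) \<and>
     (\<forall>p X. \<rho> p = 0 \<longrightarrow> X \<noteq> 0 \<longrightarrow> dirderivs \<rho> [X] p = 0 \<longrightarrow> dirderivs \<rho> [X, X] p > 0)"

definition outer_normal :: "('a::euclidean_space \<Rightarrow> real) \<Rightarrow> 'a \<Rightarrow> 'a" where
  "outer_normal \<rho> p = grad \<rho> p /\<^sub>R norm (grad \<rho> p)"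

definition extends_cont :: "'a::topological_space set \<Rightarrow> ('a \<Rightarrow> real) \<Rightarrow> bool" where
  "extends_cont \<Omega> h \<longleftrightarrow> (\<exists>g. continuous_on (closure \<Omega>) g \<and> (\<forall>x\<in>\<Omega>. g x = h x))"

definition C2_closure :: "'a::euclidean_space set \<Rightarrow> ('a \<Rightarrow> real) \<Rightarrow> bool" where
  "C2_closure \<Omega> \<phi> \<longleftrightarrow> continuous_on (closure \<Omega>) \<phi> \<and>
     (\<forall>x\<in>\<Omega>. \<phi> differentiable (at x)) \<and>
     (\<forall>u. \<forall>x\<in>\<Omega>. dirderivs \<phi> [u] differentiable (at x)) \<and>
     (\<forall>u. extends_cont \<Omega> (dirderivs \<phi> [u])) \<and>
     (\<forall>u v. extends_cont \<Omega> (dirderivs \<phi> [u, v]))"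

end

theory Submission
  imports Defs
begin


lemma line_deriv:
  fixes f :: "'a::real_normed_vector \<Rightarrow> real"
  assumes "(f has_derivative f') (at (q + t *\<^sub>R T))"
  shows "((\<lambda>s. f (q + s *\<^sub>R T)) has_real_derivative f' T) (at t)"
proof -
  have l: "((\<lambda>s. q + s *\<^sub>R T) has_derivative (\<lambda>s. s *\<^sub>R T)) (at t)"
    by (auto intro!: derivative_eq_intros)
  have "((\<lambda>s. f (q + s *\<^sub>R T)) has_derivative (\<lambda>s. f' (s *\<^sub>R T))) (at t)"
    using has_derivative_compose[OF l assms] by simp
  moreover have "linear f'" using assms has_derivative_linear by blast
  moreover have "(\<lambda>s. f' (s *\<^sub>R T)) = (*) (f' T)"
    using calculation(2) by (auto simp: linear_scale)
  ultimately show ?thesis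
    by (simp add: has_field_derivative_def)
qed

lemma zeros_closed:
  fixes g :: "real \<Rightarrow> real"
  assumes "continuous_on {a..b} g"
  shows "compact {t\<in>{a..b}. g t = 0}"
proof -
  have "closed ({a..b} \<inter> g -` {0})"
    by (rule continuous_closed_preimage[OF assms]) auto
  moreover have "{t\<in>{a..b}. g t = 0} = {a..b} \<inter> g -` {0}" by auto
  ultimately show ?thesis
    by (metis bounded_Int bounded_closed_interval compact_eq_bounded_closed)
qed

lemma root_lemma:
  fixes g :: "real \<Rightarrow> real"
  assumes R: "R > 0" and cont: "continuous_on {-R..R} g"
    and gm: "g (-R) > 0" and gp: "g R > 0" and g0: "g 0 < 0"
  shows "\<exists>t1 t2. -R < t1 \<and> t1 < 0 \<and> 0 < t2 \<and> t2 < R \<and> g t1 = 0 \<and> g t2 = 0 \<and>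
            (\<forall>t. t1 < t \<and> t < t2 \<longrightarrow> g t < 0)"
proof -
  have c2: "continuous_on {0..R} g" using cont by (rule continuous_on_subset) auto
  have c1: "continuous_on {-R..0} g" using cont by (rule continuous_on_subset) auto
  have Z2: "compact {t\<in>{0..R}. g t = 0}" by (rule zeros_closed[OF c2])
  have Z1: "compact {t\<in>{-R..0}. g t = 0}" by (rule zeros_closed[OF c1])
  obtain z2 where "0 \<le> z2" "z2 \<le> R" "g z2 = 0"
    using IVT'[of g 0 0 R] g0 gp R c2 by force
  then have ne2: "{t\<in>{0..R}. g t = 0} \<noteq> {}" by auto
  obtain z1 where "-R \<le> z1" "z1 \<le> 0" "g z1 = 0"
    using IVT2'[of g 0 0 "-R"] g0 gm R c1 by force
  then have ne1: "{t\<in>{-R..0}. g t = 0} \<noteq> {}" by auto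
  obtain t2 where t2: "t2 \<in> {t\<in>{0..R}. g t = 0}" and t2min: "\<forall>s\<in>{t\<in>{0..R}. g t = 0}. t2 \<le> s"
    using compact_attains_inf[OF Z2 ne2] by blast
  obtain t1 where t1: "t1 \<in> {t\<in>{-R..0}. g t = 0}" and t1max: "\<forall>s\<in>{t\<in>{-R..0}. g t = 0}. s \<le> t1"
    using compact_attains_sup[OF Z1 ne1] by blast
  have "t2 \<noteq> 0" "t2 \<noteq> R" using t2 g0 gp by auto
  have "t1 \<noteq> 0" "t1 \<noteq> -R" using t1 g0 gm by auto
  have neg: "g t < 0" if "t1 < t" "t < t2" for t
  proof (rule ccontr)
    assume "\<not> g t < 0"
    then have ge: "g t \<ge> 0" by simp
    show False
    proof (cases "t \<ge> 0")
      case True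
      have "continuous_on {0..t} g" using c2 by (rule continuous_on_subset) (use that t2 in auto)
      then obtain z where "0 \<le> z" "z \<le> t" "g z = 0"
        using IVT'[of g 0 0 t] g0 ge True by force
      then show False using t2min that t2 by force
    next
      case False
      have "continuous_on {t..0} g" using c1 by (rule continuous_on_subset) (use that t1 False in auto)
      then obtain z where z: "t \<le> z" "z \<le> 0" "g z = 0"
        using IVT2'[of g 0 0 t] g0 ge False by force
      moreover have "-R \<le> t" using t1 that by auto
      ultimately have "z \<in> {t\<in>{-R..0}. g t = 0}" by auto
      then show False using t1max that z by force
    qed
  qed
  show ?thesis
    apply (rule exI[of _ t1], rule exI[of _ t2])
    using t1 t2 \<open>t2 \<noteq> 0\<close> \<open>t2 \<noteq> R\<close> \<open>t1 \<noteq> 0\<close> \<open>t1 \<noteq> -R\<close> neg by auto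
qed

lemma taylor_lower:
  fixes g g1 g2 :: "real \<Rightarrow> real"
  assumes d1: "\<And>t. -R \<le> t \<Longrightarrow> t \<le> R \<Longrightarrow> (g has_real_derivative g1 t) (at t)"
    and d2: "\<And>t. -R \<le> t \<Longrightarrow> t \<le> R \<Longrightarrow> (g1 has_real_derivative g2 t) (at t)"
    and m: "\<And>t. -R \<le> t \<Longrightarrow> t \<le> R \<Longrightarrow> g2 t \<ge> m"
    and t: "-R \<le> t" "t \<le> R"
  shows "g t \<ge> g 0 + g1 0 * t + m / 2 * t\<^sup>2"
proof (cases "t = 0")
  case True then show ?thesis by simp
next
  case False
  define diff where "diff = (\<lambda>k::nat. if k = 0 then g else if k = 1 then g1 else g2)"
  have "\<exists>s. (if t < 0 then t < s \<and> s < 0 else 0 < s \<and> s < t) \<and>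
    g t = (\<Sum>k<2. (diff k 0 / fact k) * (t - 0)^k) + (diff 2 s / fact 2) * (t - 0)^2"
    apply (rule Taylor[of 2 diff g "-R" R 0 t])
    using d1 d2 t False by (auto simp: diff_def less_2_cases_iff)
  then obtain s where s: "(if t < 0 then t < s \<and> s < 0 else 0 < s \<and> s < t)"
    and eq: "g t = (\<Sum>k<2. (diff k 0 / fact k) * (t - 0)^k) + (diff 2 s / fact 2) * (t - 0)^2"
    by blast
  have "-R \<le> s" "s \<le> R" using s t by (auto split: if_splits)
  then have "g2 s \<ge> m" by (rule m)
  moreover have "g t = g 0 + g1 0 * t + g2 s / 2 * t\<^sup>2"
    using eq by (simp add: diff_def numeral_2_eq_2)
  moreover have "t\<^sup>2 \<ge> 0" by simp
  ultimately show ?thesis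
    by (smt (verit, ccfv_SIG) divide_right_mono mult_right_mono)
qed

lemma interp_lemma:
  fixes h h1 h2 :: "real \<Rightarrow> real"
  assumes t: "t1 < 0" "0 < t2" and cont: "continuous_on {t1..t2} h"
    and d1: "\<And>t. t1 < t \<Longrightarrow> t < t2 \<Longrightarrow> (h has_real_derivative h1 t) (at t)"
    and d2: "\<And>t. t1 < t \<Longrightarrow> t < t2 \<Longrightarrow> (h1 has_real_derivative h2 t) (at t)"
    and z: "h t1 = 0" "h t2 = 0"
  shows "\<exists>\<xi>. t1 < \<xi> \<and> \<xi> < t2 \<and> h2 \<xi> * (t1 * t2) = 2 * h 0"
proof -
  define c where "c = h 0 / (t1 * t2)"
  have t12: "t1 * t2 < 0" using t by (simp add: mult_neg_pos)
  define k where "k = (\<lambda>t. h t - c * (t - t1) * (t - t2))"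
  define k1 where "k1 = (\<lambda>t. h1 t - c * (2 * t - t1 - t2))"
  have dk: "(k has_real_derivative k1 t) (at t)" if "t1 < t" "t < t2" for t
    unfolding k_def k1_def
    by (rule derivative_eq_intros d1 that refl | simp add: algebra_simps)+
  have dk1: "(k1 has_real_derivative (h2 t - 2 * c)) (at t)" if "t1 < t" "t < t2" for t
    unfolding k1_def
    by (rule derivative_eq_intros d2 that refl | simp add: algebra_simps)+
  have kt1: "k t1 = 0" "k t2 = 0" using z by (auto simp: k_def)
  have nz: "t1 * t2 \<noteq> 0" using t by auto
  have "c * (t1 * t2) = h 0" using nz by (simp add: c_def)
  then have k0: "k 0 = 0" by (simp add: k_def algebra_simps)
  have ck: "continuous_on {t1..t2} k" unfolding k_def
    by (intro continuous_intros cont)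
  obtain a where a: "t1 < a" "a < 0" "DERIV k a :> 0"
    using Rolle[of t1 0 k] t kt1 k0 dk ck
    by (smt (verit, best) atLeastAtMost_iff continuous_on_subset real_differentiable_def subsetI)
  obtain b where b: "0 < b" "b < t2" "DERIV k b :> 0"
    using Rolle[of 0 t2 k] t kt1 k0 dk ck
    by (smt (verit, best) atLeastAtMost_iff continuous_on_subset real_differentiable_def subsetI)
  have ka: "k1 a = 0" using DERIV_unique[OF dk[of a] a(3)] a t by simp
  have kb: "k1 b = 0" using DERIV_unique[OF dk[of b] b(3)] b t by simp
  have ck1: "continuous_on {a..b} k1"
  proof (rule DERIV_atLeastAtMost_imp_continuous_on)
    fix x assume "a \<le> x" "x \<le> b"
    then have "t1 < x" "x < t2" using a b by linarith+
    then show "\<exists>y. DERIV k1 x :> y" using dk1 by blast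
  qed
  obtain \<xi> where xi: "a < \<xi>" "\<xi> < b" "DERIV k1 \<xi> :> 0"
  proof -
    have "\<And>x. a < x \<Longrightarrow> x < b \<Longrightarrow> k1 differentiable (at x)"
    proof -
      fix x assume "a < x" "x < b"
      then have "t1 < x" "x < t2" using a b by linarith+
      then show "k1 differentiable (at x)" using dk1 real_differentiable_def by blast
    qed
    then show ?thesis using Rolle[of a b k1] a b ka kb ck1 that by force
  qed
  have "h2 \<xi> - 2 * c = 0" using DERIV_unique[OF dk1[of \<xi>] xi(3)] xi a b by simp
  then have "h2 \<xi> = 2 * c" by simp
  then have "h2 \<xi> * (t1 * t2) = 2 * (c * (t1 * t2))" by simp
  then have "h2 \<xi> * (t1 * t2) = 2 * h 0" using \<open>c * (t1 * t2) = h 0\<close> by simp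
  then show ?thesis using xi a b by (intro exI[of _ \<xi>]) auto
qed



lemma dd_line:
  assumes "dirderivs f us differentiable (at (q + t *\<^sub>R u))"
  shows "((\<lambda>s. dirderivs f us (q + s *\<^sub>R u)) has_real_derivative dirderivs f (u # us) (q + t *\<^sub>R u)) (at t)"
  using line_deriv[OF frechet_derivative_works[THEN iffD1, OF assms]] by simp

lemma dd_line0:
  assumes "f differentiable (at (q + t *\<^sub>R u))"
  shows "((\<lambda>s. f (q + s *\<^sub>R u)) has_real_derivative dirderivs f [u] (q + t *\<^sub>R u)) (at t)"
  using dd_line[of f "[]" q t u] assms by simp

lemma dd_cont:
  assumes "g differentiable (at x)" "e > 0"
  shows "\<exists>\<delta>>0. \<forall>y. dist y x < \<delta> \<longrightarrow> dist (g y) (g x) < e"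
proof -
  have "continuous (at x) g" using assms(1) differentiable_imp_continuous_within by blast
  then show ?thesis using assms(2) unfolding continuous_at_eps_delta by blast
qed

lemma dist_line: "dist (p + a *\<^sub>R v + t *\<^sub>R T) p \<le> \<bar>a\<bar> * norm v + \<bar>t\<bar> * norm T"
proof -
  have "dist (p + a *\<^sub>R v + t *\<^sub>R T) p = norm (a *\<^sub>R v + t *\<^sub>R T)" by (simp add: dist_norm)
  also have "\<dots> \<le> norm (a *\<^sub>R v) + norm (t *\<^sub>R T)" by (rule norm_triangle_ineq)
  finally show ?thesis by simp
qed



lemma chord:
  fixes \<rho> \<phi> :: "'a::euclidean_space \<Rightarrow> real"
  assumes \<Omega>: "\<Omega> = {x. \<rho> x < 0}"
    and sm: "\<And>us x. dirderivs \<rho> us differentiable (at x)"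
    and d\<phi>: "\<And>x. x \<in> \<Omega> \<Longrightarrow> \<phi> differentiable (at x)"
    and d\<phi>1: "\<And>u x. x \<in> \<Omega> \<Longrightarrow> dirderivs \<phi> [u] differentiable (at x)"
    and c\<phi>: "continuous_on (closure \<Omega>) \<phi>"
    and z: "\<And>x. x \<in> closure \<Omega> \<Longrightarrow> \<rho> x = 0 \<Longrightarrow> \<phi> x = 0"
    and p: "\<rho> p = 0"
    and \<gamma>: "dirderivs \<rho> [\<nu>] p > 0" and \<nu>: "norm \<nu> = 1"
    and d: "d < 0" "((\<lambda>x. dirderivs \<phi> [\<nu>] x) \<longlongrightarrow> d) (at p within \<Omega>)"
    and T0: "dirderivs \<rho> [T] p = 0" and T2: "dirderivs \<rho> [T,T] p > 0"
  shows "(\<forall>e>0. \<exists>y\<in>\<Omega>. dist y p < e \<and> dirderivs \<phi> [T] y = 0) \<and>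
         (\<exists>\<kappa>>0. \<forall>e>0. \<exists>y\<in>\<Omega>. dist y p < e \<and> dirderivs \<phi> [T,T] y \<le> -\<kappa>)"
proof -
  define \<gamma> where "\<gamma> = dirderivs \<rho> [\<nu>] p"
  define aT where "aT = dirderivs \<rho> [T,T] p"
  define m where "m = aT / 2"
  have \<gamma>0: "\<gamma> > 0" using \<gamma> by (simp add: \<gamma>_def)
  have m0: "m > 0" using T2 by (simp add: m_def aT_def)
  have T_nz: "T \<noteq> 0"
  proof
    assume "T = 0"
    have "linear (frechet_derivative (dirderivs \<rho> [T]) (at p))"
      using sm linear_frechet_derivative by blast
    then have "dirderivs \<rho> [T,T] p = 0" using \<open>T = 0\<close> by (simp add: linear_0)
    then show False using T2 by simp
  qed
  define nT where "nT = norm T"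
  have nT0: "nT > 0" using T_nz by (simp add: nT_def)
  have pnotin: "p \<notin> \<Omega>" using p \<Omega> by simp
  obtain r1 where r1: "r1 > 0" "\<And>y. dist y p < r1 \<Longrightarrow> dist (dirderivs \<rho> [\<nu>] y) \<gamma> < \<gamma>/2"
    using dd_cont[OF sm[of "[\<nu>]" p], of "\<gamma>/2"] \<gamma>0 unfolding \<gamma>_def by auto
  obtain r2 where r2: "r2 > 0" "\<And>y. dist y p < r2 \<Longrightarrow> dist (dirderivs \<rho> [T,T] y) aT < m"
    using dd_cont[OF sm[of "[T,T]" p], of m] m0 unfolding aT_def by auto
  have "\<forall>\<^sub>F y in at p within \<Omega>. dirderivs \<phi> [\<nu>] y < d/2"
    using order_tendstoD(2)[OF d(2), of "d/2"] d(1) by simp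
  then obtain r3 where r3: "r3 > 0" "\<And>y. y \<in> \<Omega> \<Longrightarrow> dist y p < r3 \<Longrightarrow> dirderivs \<phi> [\<nu>] y < d/2"
    unfolding eventually_at using pnotin by (metis)
  define r where "r = min r1 (min r2 r3)"
  have r0: "r > 0" using r1 r2 r3 by (simp add: r_def)
  have rnu: "\<gamma>/2 < dirderivs \<rho> [\<nu>] y \<and> dirderivs \<rho> [\<nu>] y < 3*\<gamma>/2" if "dist y p < r" for y
  proof -
    have "dist y p < r1" using that by (simp add: r_def)
    then have "\<bar>dirderivs \<rho> [\<nu>] y - \<gamma>\<bar> < \<gamma>/2" using r1(2) by (simp add: dist_real_def)
    then show ?thesis by linarith
  qed
  have rTT: "m < dirderivs \<rho> [T,T] y" if "dist y p < r" for y
  proof -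
    have "dist y p < r2" using that by (simp add: r_def)
    then have "\<bar>dirderivs \<rho> [T,T] y - aT\<bar> < m" using r2(2) by (simp add: dist_real_def)
    then show ?thesis unfolding m_def by linarith
  qed
  have rphi: "dirderivs \<phi> [\<nu>] y < d/2" if "y \<in> \<Omega>" "dist y p < r" for y
    using r3(2)[of y] that by (auto simp: r_def)
  have dlin: "dist (p + t *\<^sub>R \<nu>) p = \<bar>t\<bar>" for t using \<nu> by (simp add: dist_norm)
  have N: "- (2 * \<gamma> * s) \<le> \<rho> (p + (-s) *\<^sub>R \<nu>) \<and> \<rho> (p + (-s) *\<^sub>R \<nu>) \<le> - (\<gamma> / 2 * s)" if s: "0 < s" "s < r" for s
  proof -
    have der: "((\<lambda>t. \<rho> (p + t *\<^sub>R \<nu>)) has_real_derivative dirderivs \<rho> [\<nu>] (p + t *\<^sub>R \<nu>)) (at t)" for t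
      using dd_line0[of \<rho> p t \<nu>] sm[of "[]"] by simp
    obtain z where zz: "-s < z" "z < 0"
      "\<rho> (p + 0 *\<^sub>R \<nu>) - \<rho> (p + (-s) *\<^sub>R \<nu>) = (0 - (-s)) * dirderivs \<rho> [\<nu>] (p + z *\<^sub>R \<nu>)"
      using MVT2[of "-s" 0 "\<lambda>t. \<rho> (p + t *\<^sub>R \<nu>)" "\<lambda>t. dirderivs \<rho> [\<nu>] (p + t *\<^sub>R \<nu>)"] der s by auto
    have "dist (p + z *\<^sub>R \<nu>) p < r" using dlin[of z] zz s by simp
    then have b: "\<gamma>/2 < dirderivs \<rho> [\<nu>] (p + z *\<^sub>R \<nu>)" "dirderivs \<rho> [\<nu>] (p + z *\<^sub>R \<nu>) < 3*\<gamma>/2"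
      using rnu by auto
    have e: "\<rho> (p + (-s) *\<^sub>R \<nu>) = - s * dirderivs \<rho> [\<nu>] (p + z *\<^sub>R \<nu>)" using zz(3) p by simp
    show ?thesis unfolding e using b s \<gamma>0 by (auto intro: mult_left_mono)
  qed
  have inO: "p + (-s) *\<^sub>R \<nu> \<in> \<Omega>" if "0 < s" "s < r" for s
    using N[OF that] that \<gamma>0 \<Omega> by (simp add: mult_pos_pos) (smt (verit) mult_pos_pos divide_pos_pos)
  have pcl: "p \<in> closure \<Omega>"
    unfolding closure_approachable
  proof (intro allI impI)
    fix e :: real assume e: "e > 0"
    define s where "s = min (e/2) (r/2)"
    have "0 < s" "s < r" "s < e" using e r0 by (auto simp: s_def)
    then show "\<exists>y\<in>\<Omega>. dist y p < e" using inO dlin[of "-s"] by (intro bexI[of _ "p + (-s) *\<^sub>R \<nu>"]) auto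
  qed
  have \<phi>p: "\<phi> p = 0" using z[OF pcl p] .
  have Phi: "\<phi> (p + (-s) *\<^sub>R \<nu>) \<ge> - d / 2 * s" if s: "0 < s" "s < r" for s
  proof -
    have sub: "(\<lambda>t. p + t *\<^sub>R \<nu>) ` {-s..0} \<subseteq> closure \<Omega>"
    proof
      fix y assume "y \<in> (\<lambda>t. p + t *\<^sub>R \<nu>) ` {-s..0}"
      then obtain t where t: "-s \<le> t" "t \<le> 0" "y = p + t *\<^sub>R \<nu>" by auto
      show "y \<in> closure \<Omega>"
      proof (cases "t = 0")
        case True then show ?thesis using pcl t by simp
      next
        case False
        then have "p + (-(-t)) *\<^sub>R \<nu> \<in> \<Omega>" using inO[of "-t"] t s by simp
        then show ?thesis using t closure_subset by auto
      qed
    qed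
    have cont: "continuous_on {-s..0} (\<lambda>t. \<phi> (p + t *\<^sub>R \<nu>))"
      by (rule continuous_on_compose2[OF c\<phi> _ sub]) (intro continuous_intros)
    have inO': "p + t *\<^sub>R \<nu> \<in> \<Omega>" if "-s < t" "t < 0" for t
      using inO[of "-t"] that s by simp
    have der: "((\<lambda>t. \<phi> (p + t *\<^sub>R \<nu>)) has_real_derivative dirderivs \<phi> [\<nu>] (p + t *\<^sub>R \<nu>)) (at t)"
      if "-s < t" "t < 0" for t
      using dd_line0[of \<phi> p t \<nu>] d\<phi>[OF inO'[OF that]] by simp
    obtain l zz where lz: "-s < zz" "zz < 0" "DERIV (\<lambda>t. \<phi> (p + t *\<^sub>R \<nu>)) zz :> l"
      "\<phi> (p + 0 *\<^sub>R \<nu>) - \<phi> (p + (-s) *\<^sub>R \<nu>) = (0 - (-s)) * l"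
      using MVT[of "-s" 0 "\<lambda>t. \<phi> (p + t *\<^sub>R \<nu>)"] cont der s real_differentiable_def by force
    have l: "l = dirderivs \<phi> [\<nu>] (p + zz *\<^sub>R \<nu>)" using DERIV_unique[OF lz(3) der[OF lz(1,2)]] .
    have "dist (p + zz *\<^sub>R \<nu>) p < r" using dlin[of zz] lz s by simp
    then have "l < d/2" using rphi inO'[OF lz(1,2)] l by auto
    moreover have "\<phi> (p + (-s) *\<^sub>R \<nu>) = - s * l" using lz(4) \<phi>p by simp
    moreover have "s * l \<le> s * (d/2)" using calculation(1) s by (intro mult_left_mono) auto
    ultimately show ?thesis by (simp add: mult.commute[of d s])
  qed
  define \<kappa> where "\<kappa> = - d * m / (4 * \<gamma>)"
  have "d * m < 0" using d(1) m0 by (simp add: mult_neg_pos)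
  then have "d * m / (4 * \<gamma>) < 0" using \<gamma>0 by (intro divide_neg_pos) auto
  then have \<kappa>0: "\<kappa> > 0" by (simp add: \<kappa>_def)
  have main: "\<exists>y1\<in>\<Omega>. \<exists>y2\<in>\<Omega>. dist y1 p < e \<and> dist y2 p < e \<and> dirderivs \<phi> [T] y1 = 0
      \<and> dirderivs \<phi> [T,T] y2 \<le> -\<kappa>" if e: "e > 0" for e
  proof -
    define R where "R = r / (2 * nT)"
    have R0: "R > 0" using r0 nT0 by (simp add: R_def)
    define \<eta> where "\<eta> = min (m * R / 4) (m * e / (8 * nT))"
    have \<eta>0: "\<eta> > 0" using m0 R0 e nT0 by (simp add: \<eta>_def)
    obtain \<delta> where \<delta>: "\<delta> > 0" "\<And>y. dist y p < \<delta> \<Longrightarrow> dist (dirderivs \<rho> [T] y) 0 < \<eta>"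
      using dd_cont[OF sm[of "[T]" p] \<eta>0] T0 by auto
    define \<epsilon> where "\<epsilon> = min (min (r/4) (e/4)) (min (\<delta>/2) (min (m * R^2 / (32 * \<gamma>)) (m * (e / (2 * nT))^2 / (16 * \<gamma>))))"
    have \<epsilon>0: "\<epsilon> > 0" using r0 e \<delta> m0 R0 \<gamma>0 nT0 by (simp add: \<epsilon>_def)
    have \<epsilon>r: "\<epsilon> < r" "\<epsilon> \<le> r/4" "\<epsilon> \<le> e/4" "\<epsilon> < \<delta>" using r0 e \<delta> by (auto simp: \<epsilon>_def)
    have \<epsilon>2: "2 * \<gamma> * \<epsilon> \<le> m * R^2 / 16"
    proof -
      have "\<epsilon> \<le> m * R^2 / (32 * \<gamma>)" by (simp add: \<epsilon>_def)
      then have "2 * \<gamma> * \<epsilon> \<le> 2 * \<gamma> * (m * R^2 / (32 * \<gamma>))" using \<gamma>0 by (intro mult_left_mono) auto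
      also have "\<dots> = m * R^2 / 16" using \<gamma>0 by (simp add: field_simps)
      finally show ?thesis .
    qed
    have \<epsilon>4: "8 * \<gamma> * \<epsilon> / m \<le> (e / (2 * nT))^2 / 2"
    proof -
      have "\<epsilon> \<le> m * (e / (2 * nT))^2 / (16 * \<gamma>)" by (simp add: \<epsilon>_def)
      then have "8 * \<gamma> * \<epsilon> / m \<le> 8 * \<gamma> * (m * (e / (2 * nT))^2 / (16 * \<gamma>)) / m"
        using \<gamma>0 m0 by (intro divide_right_mono mult_left_mono) auto
      also have "\<dots> = (e / (2 * nT))^2 / 2" using \<gamma>0 m0 by (simp add: field_simps)
      finally show ?thesis .
    qed
    define q where "q = p + (-\<epsilon>) *\<^sub>R \<nu>"
    have qO: "q \<in> \<Omega>" using inO[of \<epsilon>] \<epsilon>0 \<epsilon>r by (simp add: q_def)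
    have Nq: "- (2 * \<gamma> * \<epsilon>) \<le> \<rho> q" "\<rho> q \<le> - (\<gamma> / 2 * \<epsilon>)" using N[of \<epsilon>] \<epsilon>0 \<epsilon>r by (auto simp: q_def)
    have Phq: "\<phi> q \<ge> - d / 2 * \<epsilon>" using Phi[of \<epsilon>] \<epsilon>0 \<epsilon>r by (simp add: q_def)
    define g0 where "g0 = \<rho> q"
    define e0 where "e0 = dirderivs \<rho> [T] q"
    have dq: "dist q p = \<epsilon>" using dlin[of "-\<epsilon>"] \<epsilon>0 by (simp add: q_def)
    have e0b: "\<bar>e0\<bar> < \<eta>" using \<delta>(2)[of q] dq \<epsilon>r by (simp add: e0_def dist_real_def)
    have distq: "dist (q + t *\<^sub>R T) p \<le> \<epsilon> + \<bar>t\<bar> * nT" for t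
      using dist_line[of p "-\<epsilon>" \<nu> t T] \<nu> \<epsilon>0 by (simp add: q_def nT_def)
    have inball: "dist (q + t *\<^sub>R T) p < r" if "\<bar>t\<bar> \<le> R" for t
    proof -
      have "\<bar>t\<bar> * nT \<le> R * nT" using that nT0 by (intro mult_right_mono) auto
      also have "R * nT = r / 2" using nT0 by (simp add: R_def)
      finally show ?thesis using distq[of t] \<epsilon>r r0 by linarith
    qed
    define g where "g = (\<lambda>t. \<rho> (q + t *\<^sub>R T))"
    have gd1: "(g has_real_derivative dirderivs \<rho> [T] (q + t *\<^sub>R T)) (at t)" for t
      unfolding g_def using dd_line0[of \<rho> q t T] sm[of "[]"] by simp
    have gd2: "((\<lambda>t. dirderivs \<rho> [T] (q + t *\<^sub>R T)) has_real_derivative dirderivs \<rho> [T,T] (q + t *\<^sub>R T)) (at t)" for t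
      using dd_line[of \<rho> "[T]" q t T, OF sm] by simp
    have mle: "m \<le> dirderivs \<rho> [T,T] (q + s *\<^sub>R T)" if "-R \<le> s" "s \<le> R" for s
    proof -
      have "\<bar>s\<bar> \<le> R" using that by auto
      then show ?thesis using rTT[OF inball[of s]] by simp
    qed
    have TL: "g t \<ge> g0 + e0 * t + m / 2 * t\<^sup>2" if "-R \<le> t" "t \<le> R" for t
    proof -
      have "g t \<ge> g 0 + dirderivs \<rho> [T] (q + 0 *\<^sub>R T) * t + m / 2 * t\<^sup>2"
        apply (rule taylor_lower[of R g "\<lambda>t. dirderivs \<rho> [T] (q + t *\<^sub>R T)" "\<lambda>t. dirderivs \<rho> [T,T] (q + t *\<^sub>R T)"])
            apply (rule gd1) apply (rule gd2) apply (erule (1) mle) using that by auto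
      then show ?thesis by (simp add: g_def g0_def e0_def)
    qed
    have pe: "\<gamma> / 2 * \<epsilon> > 0" using \<gamma>0 \<epsilon>0 by simp
    have g0b: "\<bar>g0\<bar> \<le> m * R^2 / 16" using Nq \<epsilon>2 pe unfolding g0_def by (smt (verit))
    have e0R: "\<bar>e0\<bar> * R \<le> m * R / 4 * R" using e0b R0 by (intro mult_right_mono) (auto simp: \<eta>_def)
    have RR: "m / 2 * R\<^sup>2 = 2 * (m * R / 4 * R)" by (simp add: power2_eq_square)
    have gR: "g R > 0"
    proof -
      have "g R \<ge> g0 + e0 * R + m / 2 * R\<^sup>2" using TL[of R] R0 by simp
      moreover have "m * R / 4 * R > 0" "m * R^2 / 16 < m * R / 4 * R" using m0 R0 by (auto simp: power2_eq_square)
      moreover have "e0 * R \<ge> - (\<bar>e0\<bar> * R)" using R0 mult_right_mono[of "-\<bar>e0\<bar>" e0 R] by simp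
      ultimately show ?thesis using g0b e0R RR by linarith
    qed
    have gmR: "g (-R) > 0"
    proof -
      have "g (-R) \<ge> g0 + e0 * (-R) + m / 2 * (-R)\<^sup>2" using TL[of "-R"] R0 by simp
      moreover have "m * R / 4 * R > 0" "m * R^2 / 16 < m * R / 4 * R" using m0 R0 by (auto simp: power2_eq_square)
      moreover have "e0 * (-R) \<ge> - (\<bar>e0\<bar> * R)" using R0 mult_right_mono[of "-\<bar>e0\<bar>" "-e0" R] by simp
      moreover have "m / 2 * (-R)\<^sup>2 = m / 2 * R\<^sup>2" by simp
      moreover have "- \<bar>g0\<bar> \<le> g0" by simp
      ultimately show ?thesis using g0b e0R RR by linarith
    qed
    have g0n: "g 0 < 0" using Nq pe by (simp add: g_def)
    have gc: "continuous_on {-R..R} g"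
      using gd1 by (intro DERIV_atLeastAtMost_imp_continuous_on) blast
    obtain t1 t2 where tt: "-R < t1" "t1 < 0" "0 < t2" "t2 < R" "g t1 = 0" "g t2 = 0"
      and gneg: "\<And>t. t1 < t \<Longrightarrow> t < t2 \<Longrightarrow> g t < 0"
      using root_lemma[OF R0 gc gmR gR g0n] by blast
    have chordO: "q + t *\<^sub>R T \<in> \<Omega>" if "t1 < t" "t < t2" for t
      using gneg[OF that] \<Omega> by (simp add: g_def)
    have img: "(\<lambda>t. q + t *\<^sub>R T) ` {t1..t2} \<subseteq> closure \<Omega>"
    proof -
      have "(\<lambda>t. q + t *\<^sub>R T) ` closure {t1<..<t2} \<subseteq> closure \<Omega>"
        by (rule image_closure_subset) (auto intro!: continuous_intros chordO closure_subset[THEN subsetD])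
      then show ?thesis using tt by simp
    qed
    have h12: "\<phi> (q + t1 *\<^sub>R T) = 0" "\<phi> (q + t2 *\<^sub>R T) = 0"
    proof -
      have "q + t1 *\<^sub>R T \<in> closure \<Omega>" "q + t2 *\<^sub>R T \<in> closure \<Omega>" using img tt by (auto simp: image_subset_iff)
      then show "\<phi> (q + t1 *\<^sub>R T) = 0" "\<phi> (q + t2 *\<^sub>R T) = 0" using z tt by (auto simp: g_def)
    qed
    define h where "h = (\<lambda>t. \<phi> (q + t *\<^sub>R T))"
    have hc: "continuous_on {t1..t2} h"
      unfolding h_def by (rule continuous_on_compose2[OF c\<phi> _ img]) (intro continuous_intros)
    have hd1: "(h has_real_derivative dirderivs \<phi> [T] (q + t *\<^sub>R T)) (at t)" if "t1 < t" "t < t2" for t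
      unfolding h_def using dd_line0[of \<phi> q t T] d\<phi>[OF chordO[OF that]] by simp
    have hd2: "((\<lambda>t. dirderivs \<phi> [T] (q + t *\<^sub>R T)) has_real_derivative dirderivs \<phi> [T,T] (q + t *\<^sub>R T)) (at t)"
      if "t1 < t" "t < t2" for t
      using dd_line[of \<phi> "[T]" q t T, OF d\<phi>1[OF chordO[OF that]]] by simp
    have Qle: "g0 + e0 * t + m / 2 * t\<^sup>2 \<le> 0" if "t = t1 \<or> t = t2" for t
      using TL[of t] tt that by auto
    have small: "\<bar>t\<bar> * nT < e / 2" if "t = t1 \<or> t = t2" for t
    proof (cases "\<bar>t\<bar> * m < 4 * \<bar>e0\<bar>")
      case True
      then have "\<bar>t\<bar> < 4 * \<bar>e0\<bar> / m" using m0 by (simp add: field_simps)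
      also have "\<dots> < 4 * \<eta> / m" using e0b m0 by (simp add: divide_strict_right_mono)
      also have "\<dots> \<le> 4 * (m * e / (8 * nT)) / m"
      proof -
        have "\<eta> \<le> m * e / (8 * nT)" by (simp add: \<eta>_def)
        then have "4 * \<eta> \<le> 4 * (m * e / (8 * nT))" by linarith
        then show ?thesis by (rule divide_right_mono[OF _ less_imp_le[OF m0]])
      qed
      also have "\<dots> = e / (2 * nT)" using m0 by (simp add: field_simps)
      finally have "\<bar>t\<bar> * nT < e / (2 * nT) * nT" using nT0 by (intro mult_strict_right_mono) auto
      then show ?thesis using nT0 by simp
    next
      case False
      then have "4 * \<bar>e0\<bar> \<le> \<bar>t\<bar> * m" by simp
      then have "4 * \<bar>e0\<bar> * \<bar>t\<bar> \<le> \<bar>t\<bar> * m * \<bar>t\<bar>" by (rule mult_right_mono) simp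
      moreover have "\<bar>t\<bar> * m * \<bar>t\<bar> = m * t\<^sup>2"
        by (metis abs_mult_self_eq mult.commute mult.left_commute power2_eq_square)
      ultimately have a: "\<bar>e0\<bar> * \<bar>t\<bar> \<le> m * t\<^sup>2 / 4" by simp
      have "e0 * t \<ge> - (\<bar>e0\<bar> * \<bar>t\<bar>)"
        by (metis abs_ge_minus_self abs_mult minus_le_iff mult_minus_left)
      then have "m * t\<^sup>2 / 4 \<le> - g0" using Qle[OF that] a by simp
      then have "m * t\<^sup>2 / 4 \<le> 2 * \<gamma> * \<epsilon>" using Nq by (simp add: g0_def)
      then have "t\<^sup>2 \<le> 8 * \<gamma> * \<epsilon> / m" using m0 by (simp add: field_simps)
      also have "\<dots> < (e / (2 * nT))^2"
      proof -
        have "(e / (2 * nT))^2 > 0" using e nT0 by simp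
        then show ?thesis using \<epsilon>4 by linarith
      qed
      finally have "\<bar>t\<bar>\<^sup>2 < (e / (2 * nT))\<^sup>2" by simp
      then have "\<bar>t\<bar> < e / (2 * nT)" by (rule power2_less_imp_less) (use e nT0 in simp)
      then have "\<bar>t\<bar> * nT < e / (2 * nT) * nT" using nT0 by (intro mult_strict_right_mono) auto
      then show ?thesis using nT0 by simp
    qed
    have closep: "dist (q + \<xi> *\<^sub>R T) p < e" if "t1 < \<xi>" "\<xi> < t2" for \<xi>
    proof -
      have "\<bar>\<xi>\<bar> * nT \<le> max (\<bar>t1\<bar> * nT) (\<bar>t2\<bar> * nT)" using that tt nT0
        by (smt (verit, best) mult_right_mono)
      then have "\<bar>\<xi>\<bar> * nT < e / 2" using small[of t1] small[of t2] by auto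
      then show ?thesis using distq[of \<xi>] \<epsilon>r e by linarith
    qed
    obtain \<xi>1 where x1: "t1 < \<xi>1" "\<xi>1 < t2" "DERIV h \<xi>1 :> 0"
      using Rolle[of t1 t2 h] tt h12 hc hd1 real_differentiable_def by (force simp: h_def)
    have A: "dirderivs \<phi> [T] (q + \<xi>1 *\<^sub>R T) = 0" using DERIV_unique[OF hd1[OF x1(1,2)] x1(3)] .
    obtain \<xi>2 where x2: "t1 < \<xi>2" "\<xi>2 < t2" "dirderivs \<phi> [T,T] (q + \<xi>2 *\<^sub>R T) * (t1 * t2) = 2 * h 0"
      using interp_lemma[of t1 t2 h "\<lambda>t. dirderivs \<phi> [T] (q + t *\<^sub>R T)" "\<lambda>t. dirderivs \<phi> [T,T] (q + t *\<^sub>R T)"]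
        tt hc hd1 hd2 h12 by (auto simp: h_def)
    define H where "H = dirderivs \<phi> [T,T] (q + \<xi>2 *\<^sub>R T)"
    have h0: "h 0 = \<phi> q" by (simp add: h_def)
    have P: "t2 * (g0 + e0 * t1 + m / 2 * t1\<^sup>2) - t1 * (g0 + e0 * t2 + m / 2 * t2\<^sup>2) \<le> 0"
      using Qle[of t1] Qle[of t2] tt
      by (smt (verit) mult_nonneg_nonpos mult_nonpos_nonpos)
    have "t2 * (g0 + e0 * t1 + m / 2 * t1\<^sup>2) - t1 * (g0 + e0 * t2 + m / 2 * t2\<^sup>2)
          = (t2 - t1) * (g0 - m / 2 * (t1 * t2))" by (simp add: field_simps power2_eq_square)
    then have "(t2 - t1) * (g0 - m / 2 * (t1 * t2)) \<le> 0" using P by simp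
    then have "g0 - m / 2 * (t1 * t2) \<le> 0" using tt by (simp add: mult_le_0_iff)
    then have pr: "- (t1 * t2) * m \<le> 4 * \<gamma> * \<epsilon>" using Nq by (simp add: g0_def algebra_simps)
    have pos12: "- (t1 * t2) > 0" using tt by (simp add: mult_neg_pos)
    have Hb: "H * (- (t1 * t2)) \<le> d * \<epsilon>" using x2(3) h0 Phq by (simp add: H_def algebra_simps)
    have B: "H \<le> -\<kappa>"
    proof (rule ccontr)
      assume "\<not> H \<le> -\<kappa>"
      then have "H > -\<kappa>" by simp
      then have "H * (- (t1 * t2)) > -\<kappa> * (- (t1 * t2))" by (rule mult_strict_right_mono[OF _ pos12])
      moreover have "-\<kappa> * (- (t1 * t2)) \<ge> -\<kappa> * (4 * \<gamma> * \<epsilon> / m)"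
      proof -
        have "- (t1 * t2) \<le> 4 * \<gamma> * \<epsilon> / m" using pr m0 by (simp add: field_simps)
        then show ?thesis by (rule mult_left_mono_neg) (use \<kappa>0 in simp)
      qed
      moreover have "-\<kappa> * (4 * \<gamma> * \<epsilon> / m) = d * \<epsilon>" using m0 \<gamma>0 by (simp add: \<kappa>_def field_simps)
      ultimately show False using Hb by linarith
    qed
    show ?thesis
      using A B x1 x2 closep chordO unfolding H_def by blast
  qed
  show ?thesis
  proof
    show "\<forall>e>0. \<exists>y\<in>\<Omega>. dist y p < e \<and> dirderivs \<phi> [T] y = 0" using main by blast
    show "\<exists>\<kappa>>0. \<forall>e>0. \<exists>y\<in>\<Omega>. dist y p < e \<and> dirderivs \<phi> [T,T] y \<le> -\<kappa>"
      using main \<kappa>0 by blast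
  qed
qed



definition Gh :: "('a::euclidean_space \<Rightarrow> 'a \<Rightarrow> real) \<Rightarrow> 'a \<Rightarrow> 'a \<Rightarrow> real" where
  "Gh G y u = (\<Sum>b\<in>Basis. (u \<bullet> b) * G b y)"

definition Hh :: "('a::euclidean_space \<Rightarrow> 'a \<Rightarrow> 'a \<Rightarrow> real) \<Rightarrow> 'a \<Rightarrow> 'a \<Rightarrow> real" where
  "Hh H y u = (\<Sum>b\<in>Basis. (u \<bullet> b) * (\<Sum>c\<in>Basis. (u \<bullet> c) * H c b y))"

lemma Gh_scale: "Gh G y (c *\<^sub>R u) = c * Gh G y u"
  by (simp add: Gh_def sum_distrib_left mult.assoc)

lemma Gh_add: "Gh G y (u + v) = Gh G y u + Gh G y v"
  by (simp add: Gh_def inner_add_left distrib_right sum.distrib)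

lemma Gh_zero: "Gh G y 0 = 0" by (simp add: Gh_def)

lemma Hh_scale: "Hh H y (c *\<^sub>R u) = c\<^sup>2 * Hh H y u"
  by (simp add: Hh_def sum_distrib_left power2_eq_square mult_ac)

lemma Hh_zero: "Hh H y 0 = 0" by (simp add: Hh_def)

lemma lin_repr:
  fixes L :: "'a::euclidean_space \<Rightarrow> real"
  assumes "linear L"
  shows "L u = (\<Sum>b\<in>Basis. (u \<bullet> b) * L b)"
proof -
  have "L u = L (\<Sum>b\<in>Basis. (u \<bullet> b) *\<^sub>R b)" by (simp add: euclidean_representation)
  also have "\<dots> = (\<Sum>b\<in>Basis. (u \<bullet> b) * L b)"
    using assms by (simp add: linear_sum linear_scale)
  finally show ?thesis .
qed

lemma Gh_cont:
  assumes "\<And>b. b \<in> Basis \<Longrightarrow> continuous_on S (G b)"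
  shows "continuous_on (S \<times> UNIV) (\<lambda>z. Gh G (fst z) (snd z))"
  unfolding Gh_def
  by (intro continuous_intros continuous_on_compose2[OF assms, of _ _ fst]) auto

lemma Hh_cont:
  assumes "\<And>b c. b \<in> Basis \<Longrightarrow> c \<in> Basis \<Longrightarrow> continuous_on S (H c b)"
  shows "continuous_on (S \<times> UNIV) (\<lambda>z. Hh H (fst z) (snd z))"
  unfolding Hh_def
  by (intro continuous_intros continuous_on_compose2[OF assms, of _ _ _ fst]) auto

lemma Gh_cont1:
  assumes "\<And>b. b \<in> Basis \<Longrightarrow> continuous_on S (G b)"
  shows "continuous_on S (\<lambda>y. Gh G y u)"
  unfolding Gh_def by (intro continuous_intros assms)

lemma Hh_cont1:
  assumes "\<And>b c. b \<in> Basis \<Longrightarrow> c \<in> Basis \<Longrightarrow> continuous_on S (H c b)"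
  shows "continuous_on S (\<lambda>y. Hh H y u)"
  unfolding Hh_def by (intro continuous_intros assms)

lemma first_eq:
  assumes "\<phi> differentiable (at x)" "\<And>b. b \<in> Basis \<Longrightarrow> G b x = dirderivs \<phi> [b] x"
  shows "dirderivs \<phi> [u] x = Gh G x u"
proof -
  have "linear (frechet_derivative \<phi> (at x))" using assms(1) linear_frechet_derivative by blast
  then show ?thesis using lin_repr[of "frechet_derivative \<phi> (at x)" u] assms(2)
    by (simp add: Gh_def)
qed

lemma second_eq:
  fixes \<phi> :: "'a::euclidean_space \<Rightarrow> real"
  assumes O: "open \<Omega>" "x \<in> \<Omega>"
    and d\<phi>: "\<And>y. y \<in> \<Omega> \<Longrightarrow> \<phi> differentiable (at y)"
    and d\<phi>1: "\<And>u y. y \<in> \<Omega> \<Longrightarrow> dirderivs \<phi> [u] differentiable (at y)"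
    and H: "\<And>b c. b \<in> Basis \<Longrightarrow> c \<in> Basis \<Longrightarrow> H c b x = dirderivs \<phi> [c, b] x"
  shows "dirderivs \<phi> [u,u] x = Hh H x u"
proof -
  define F where "F = (\<lambda>y. \<Sum>b\<in>Basis. (u \<bullet> b) * dirderivs \<phi> [b] y)"
  have eq: "dirderivs \<phi> [u] y = F y" if "y \<in> \<Omega>" for y
  proof -
    have "linear (frechet_derivative \<phi> (at y))" using d\<phi>[OF that] linear_frechet_derivative by blast
    then show ?thesis using lin_repr[of "frechet_derivative \<phi> (at y)" u] by (simp add: F_def)
  qed
  have dF: "(F has_derivative (\<lambda>v. \<Sum>b\<in>Basis. (u \<bullet> b) * frechet_derivative (dirderivs \<phi> [b]) (at x) v)) (at x)"
    unfolding F_def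
    by (intro has_derivative_sum has_derivative_mult_right frechet_derivative_works[THEN iffD1] d\<phi>1 O)
  have "(dirderivs \<phi> [u] has_derivative (\<lambda>v. \<Sum>b\<in>Basis. (u \<bullet> b) * frechet_derivative (dirderivs \<phi> [b]) (at x) v)) (at x)"
    by (rule has_derivative_transform_within_open[OF dF O]) (simp add: eq[simplified])
  then have fd: "frechet_derivative (dirderivs \<phi> [u]) (at x) = (\<lambda>v. \<Sum>b\<in>Basis. (u \<bullet> b) * frechet_derivative (dirderivs \<phi> [b]) (at x) v)"
    by (rule frechet_derivative_at[symmetric])
  have "dirderivs \<phi> [u,u] x = (\<Sum>b\<in>Basis. (u \<bullet> b) * frechet_derivative (dirderivs \<phi> [b]) (at x) u)"
    using fd by simp
  also have "\<dots> = (\<Sum>b\<in>Basis. (u \<bullet> b) * (\<Sum>c\<in>Basis. (u \<bullet> c) * H c b x))"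
  proof (rule sum.cong[OF refl])
    fix b :: 'a assume b: "b \<in> Basis"
    have "linear (frechet_derivative (dirderivs \<phi> [b]) (at x))" using d\<phi>1[OF O(2)] linear_frechet_derivative by blast
    then have "frechet_derivative (dirderivs \<phi> [b]) (at x) u = (\<Sum>c\<in>Basis. (u \<bullet> c) * frechet_derivative (dirderivs \<phi> [b]) (at x) c)"
      by (rule lin_repr)
    also have "\<dots> = (\<Sum>c\<in>Basis. (u \<bullet> c) * H c b x)"
      using H b by simp
    finally show "(u \<bullet> b) * frechet_derivative (dirderivs \<phi> [b]) (at x) u = (u \<bullet> b) * (\<Sum>c\<in>Basis. (u \<bullet> c) * H c b x)"
      by simp
  qed
  finally show ?thesis by (simp add: Hh_def)
qed

lemma ln_second:
  fixes \<phi> :: "'a::euclidean_space \<Rightarrow> real"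
  assumes O: "open \<Omega>" "x \<in> \<Omega>"
    and pos: "\<And>y. y \<in> \<Omega> \<Longrightarrow> \<phi> y > 0"
    and d\<phi>: "\<And>y. y \<in> \<Omega> \<Longrightarrow> \<phi> differentiable (at y)"
    and d\<phi>1: "\<And>u y. y \<in> \<Omega> \<Longrightarrow> dirderivs \<phi> [u] differentiable (at y)"
  shows "dirderivs (\<lambda>y. - ln (\<phi> y)) [X,X] x =
     ((dirderivs \<phi> [X] x)\<^sup>2 - \<phi> x * dirderivs \<phi> [X,X] x) / (\<phi> x)\<^sup>2"
proof -
  have d1: "dirderivs (\<lambda>y. - ln (\<phi> y)) [X] y = - (dirderivs \<phi> [X] y / \<phi> y)" if "y \<in> \<Omega>" for y
  proof -
    have "((\<lambda>y. ln (\<phi> y)) has_derivative (\<lambda>v. frechet_derivative \<phi> (at y) v * inverse (\<phi> y))) (at y)"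
      by (rule has_derivative_ln[OF pos[OF that] frechet_derivative_works[THEN iffD1, OF d\<phi>[OF that]]])
    then have "((\<lambda>y. - ln (\<phi> y)) has_derivative (\<lambda>v. - (frechet_derivative \<phi> (at y) v * inverse (\<phi> y)))) (at y)"
      by (rule has_derivative_minus)
    then have "frechet_derivative (\<lambda>y. - ln (\<phi> y)) (at y) = (\<lambda>v. - (frechet_derivative \<phi> (at y) v * inverse (\<phi> y)))"
      by (rule frechet_derivative_at[symmetric])
    then show ?thesis by (simp add: divide_inverse)
  qed
  define A where "A = dirderivs \<phi> [X]"
  have dA: "(A has_derivative frechet_derivative A (at x)) (at x)"
    unfolding A_def using d\<phi>1[OF O(2)] frechet_derivative_works by blast
  have dP: "(\<phi> has_derivative frechet_derivative \<phi> (at x)) (at x)"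
    using d\<phi>[OF O(2)] frechet_derivative_works by blast
  have px: "\<phi> x \<noteq> 0" using pos[OF O(2)] by simp
  have "((\<lambda>y. - (A y / \<phi> y)) has_derivative
     (\<lambda>h. - (- A x * (inverse (\<phi> x) * frechet_derivative \<phi> (at x) h * inverse (\<phi> x)) + frechet_derivative A (at x) h / \<phi> x))) (at x)"
    by (intro has_derivative_minus has_derivative_divide dA dP px)
  then have "(dirderivs (\<lambda>y. - ln (\<phi> y)) [X] has_derivative
     (\<lambda>h. - (- A x * (inverse (\<phi> x) * frechet_derivative \<phi> (at x) h * inverse (\<phi> x)) + frechet_derivative A (at x) h / \<phi> x))) (at x)"
    by (rule has_derivative_transform_within_open[OF _ O]) (simp add: d1[simplified] A_def)
  then have "frechet_derivative (dirderivs (\<lambda>y. - ln (\<phi> y)) [X]) (at x) =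
     (\<lambda>h. - (- A x * (inverse (\<phi> x) * frechet_derivative \<phi> (at x) h * inverse (\<phi> x)) + frechet_derivative A (at x) h / \<phi> x))"
    by (rule frechet_derivative_at[symmetric])
  then have "dirderivs (\<lambda>y. - ln (\<phi> y)) [X,X] x =
     - (- A x * (inverse (\<phi> x) * frechet_derivative \<phi> (at x) X * inverse (\<phi> x)) + frechet_derivative A (at x) X / \<phi> x)"
    by simp
  also have "\<dots> = ((dirderivs \<phi> [X] x)\<^sup>2 - \<phi> x * dirderivs \<phi> [X,X] x) / (\<phi> x)\<^sup>2"
    using px by (simp add: A_def field_simps power2_eq_square)
  finally show ?thesis .
qed



lemma closed_limit:
  fixes f :: "'a::metric_space \<Rightarrow> real"
  assumes cont: "continuous_on S f" and p: "p \<in> S"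
    and ap: "\<And>e. e > 0 \<Longrightarrow> \<exists>y\<in>S. dist y p < e \<and> f y \<le> c"
  shows "f p \<le> c"
proof (rule ccontr)
  assume "\<not> f p \<le> c"
  then have e: "f p - c > 0" by simp
  obtain d where d: "d > 0" "\<And>y. y \<in> S \<Longrightarrow> dist y p < d \<Longrightarrow> dist (f y) (f p) < f p - c"
    using cont p e unfolding continuous_on_iff by metis
  obtain y where "y \<in> S" "dist y p < d" "f y \<le> c" using ap[OF d(1)] by blast
  then show False using d(2)[of y] by (simp add: dist_real_def)
qed

theorem lemma3p1:
  fixes \<rho> \<phi> :: "'a::euclidean_space \<Rightarrow> real" and \<Omega> :: "'a set"
  assumes dom: "smooth_strictly_convex_domain \<rho> \<Omega>"
    and C2: "C2_closure \<Omega> \<phi>"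
    and pos: "\<forall>x\<in>\<Omega>. \<phi> x > 0"
    and bdry: "\<forall>p\<in>frontier \<Omega>. \<phi> p = 0"
    and normal: "\<forall>p\<in>frontier \<Omega>. \<exists>d<0.
                   ((\<lambda>x. dirderivs \<phi> [outer_normal \<rho> p] x) \<longlongrightarrow> d) (at p within \<Omega>)"
  shows "\<exists>\<delta>0>0. \<exists>c0>0. \<forall>x\<in>\<Omega>. \<forall>X. \<phi> x < \<delta>0 \<longrightarrow>
           dirderivs (\<lambda>y. - ln (\<phi> y)) [X, X] x \<ge> c0 * (norm X)\<^sup>2 / \<phi> x"
proof -
  have sm: "\<And>us x. dirderivs \<rho> us differentiable (at x)"
    and \<Omega>def: "\<Omega> = {x. \<rho> x < 0}" and bdd: "bounded \<Omega>"
    and gnz: "\<And>p. \<rho> p = 0 \<Longrightarrow> grad \<rho> p \<noteq> 0"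
    and conv: "\<And>p X. \<rho> p = 0 \<Longrightarrow> X \<noteq> 0 \<Longrightarrow> dirderivs \<rho> [X] p = 0 \<Longrightarrow> dirderivs \<rho> [X, X] p > 0"
    using dom unfolding smooth_strictly_convex_domain_def smooth_fun_def by blast+
  have c\<phi>: "continuous_on (closure \<Omega>) \<phi>"
    and d\<phi>: "\<And>x. x \<in> \<Omega> \<Longrightarrow> \<phi> differentiable (at x)"
    and d\<phi>1: "\<And>u x. x \<in> \<Omega> \<Longrightarrow> dirderivs \<phi> [u] differentiable (at x)"
    and ext1: "\<forall>u. extends_cont \<Omega> (dirderivs \<phi> [u])"
    and ext2: "\<forall>u v. extends_cont \<Omega> (dirderivs \<phi> [u, v])"
    using C2 unfolding C2_closure_def by blast+
  have "\<forall>u. \<exists>g. continuous_on (closure \<Omega>) g \<and> (\<forall>x\<in>\<Omega>. g x = dirderivs \<phi> [u] x)"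
    using ext1 unfolding extends_cont_def by blast
  then obtain G where G: "\<And>u. continuous_on (closure \<Omega>) (G u)" "\<And>u x. x \<in> \<Omega> \<Longrightarrow> G u x = dirderivs \<phi> [u] x"
    by metis
  have "\<forall>z. \<exists>g. continuous_on (closure \<Omega>) g \<and> (\<forall>x\<in>\<Omega>. g x = dirderivs \<phi> [fst z, snd z] x)"
    using ext2 unfolding extends_cont_def by blast
  then obtain Hp where Hp: "\<And>z. continuous_on (closure \<Omega>) (Hp z)" "\<And>z x. x \<in> \<Omega> \<Longrightarrow> Hp z x = dirderivs \<phi> [fst z, snd z] x"
    by metis
  define H where "H = (\<lambda>c b. Hp (c, b))"
  have Hc: "continuous_on (closure \<Omega>) (H c b)" for c b using Hp(1) by (simp add: H_def)
  have He: "H c b x = dirderivs \<phi> [c, b] x" if "x \<in> \<Omega>" for c b x using Hp(2)[OF that] by (simp add: H_def)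
  have \<rho>c: "continuous_on UNIV \<rho>"
    using sm[of "[]"] by (intro continuous_at_imp_continuous_on) (simp add: differentiable_imp_continuous_within)
  have openO: "open \<Omega>" unfolding \<Omega>def by (rule open_Collect_less[OF \<rho>c continuous_on_const])
  have clO: "closure \<Omega> \<subseteq> {x. \<rho> x \<le> 0}"
    by (rule closure_minimal) (auto simp: \<Omega>def intro: closed_Collect_le[OF \<rho>c continuous_on_const])
  have L1: "dirderivs \<phi> [u] x = Gh G x u" if "x \<in> \<Omega>" for u x
    by (rule first_eq[OF d\<phi>[OF that]]) (simp add: G(2)[OF that])
  have L2: "dirderivs \<phi> [u, u] x = Hh H x u" if "x \<in> \<Omega>" for u x
    by (rule second_eq[OF openO that d\<phi> d\<phi>1]) (simp_all add: He[OF that])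
  have contG: "continuous_on (closure \<Omega> \<times> UNIV) (\<lambda>z. Gh G (fst z) (snd z))"
    by (rule Gh_cont) (rule G(1))
  have contH: "continuous_on (closure \<Omega> \<times> UNIV) (\<lambda>z. Hh H (fst z) (snd z))"
    by (rule Hh_cont) (rule Hc)
  have contG1: "continuous_on (closure \<Omega>) (\<lambda>y. Gh G y u)" for u
    by (rule Gh_cont1) (rule G(1))
  have contH1: "continuous_on (closure \<Omega>) (\<lambda>y. Hh H y u)" for u
    by (rule Hh_cont1) (rule Hc)
  have z: "\<phi> x = 0" if "x \<in> closure \<Omega>" "\<rho> x = 0" for x
  proof -
    have "x \<notin> \<Omega>" using that \<Omega>def by simp
    then have "x \<in> frontier \<Omega>" using that openO by (simp add: frontier_def interior_open)
    then show ?thesis using bdry by blast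
  qed
  have bd: "Hh H p X0 < 0"
    if pcl: "p \<in> closure \<Omega>" and pn: "p \<notin> \<Omega>" and X0: "norm X0 = 1" and G0: "Gh G p X0 = 0" for p X0
  proof -
    have \<rho>p: "\<rho> p = 0" using pcl pn clO \<Omega>def by force
    have pfr: "p \<in> frontier \<Omega>" using pcl pn openO by (simp add: frontier_def interior_open)
    define gr where "gr = grad \<rho> p"
    have gr0: "gr \<noteq> 0" using gnz[OF \<rho>p] by (simp add: gr_def)
    define \<nu> where "\<nu> = outer_normal \<rho> p"
    have \<nu>def: "\<nu> = gr /\<^sub>R norm gr" by (simp add: \<nu>_def outer_normal_def gr_def)
    have n\<nu>: "norm \<nu> = 1" using gr0 by (simp add: \<nu>def)
    have grnu: "gr = norm gr *\<^sub>R \<nu>" using gr0 by (simp add: \<nu>def)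
    have Dr: "dirderivs \<rho> [u] p = gr \<bullet> u" for u
    proof -
      have "linear (frechet_derivative \<rho> (at p))" using sm[of "[]" p] linear_frechet_derivative by simp
      then have "frechet_derivative \<rho> (at p) u = (\<Sum>b\<in>Basis. (u \<bullet> b) * frechet_derivative \<rho> (at p) b)"
        by (rule lin_repr)
      then show ?thesis by (simp add: gr_def grad_def inner_sum_right inner_commute mult.commute)
    qed
    have \<gamma>: "dirderivs \<rho> [\<nu>] p > 0"
    proof -
      have "dirderivs \<rho> [\<nu>] p = norm gr * (\<nu> \<bullet> \<nu>)" using Dr[of \<nu>] grnu
        by (metis inner_scaleR_left)
      also have "\<nu> \<bullet> \<nu> = 1" using n\<nu> by (simp add: dot_square_norm)
      finally show ?thesis using gr0 by simp
    qed
    obtain d where d: "d < 0" "((\<lambda>x. dirderivs \<phi> [\<nu>] x) \<longlongrightarrow> d) (at p within \<Omega>)"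
      using normal pfr unfolding \<nu>_def by blast
    have Gnu: "Gh G p \<nu> = d"
    proof -
      have "((\<lambda>y. Gh G y \<nu>) \<longlongrightarrow> Gh G p \<nu>) (at p within closure \<Omega>)"
        using contG1[of \<nu>] pcl unfolding continuous_on_def by blast
      then have tA: "((\<lambda>y. Gh G y \<nu>) \<longlongrightarrow> Gh G p \<nu>) (at p within \<Omega>)"
        by (rule tendsto_within_subset) (rule closure_subset)
      have tB: "\<forall>\<^sub>F y in at p within \<Omega>. Gh G y \<nu> = dirderivs \<phi> [\<nu>] y"
        using L1 by (auto simp: eventually_at_filter)
      have "((\<lambda>y. dirderivs \<phi> [\<nu>] y) \<longlongrightarrow> Gh G p \<nu>) (at p within \<Omega>)"
        using tendsto_cong[OF tB] tA by blast
      moreover have "\<not> trivial_limit (at p within \<Omega>)"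
        using pcl pn by (simp add: trivial_limit_within closure_def)
      ultimately show ?thesis using d(2) tendsto_unique by blast
    qed
    have ch: "(\<forall>e>0. \<exists>y\<in>\<Omega>. dist y p < e \<and> dirderivs \<phi> [T] y = 0) \<and>
         (\<exists>\<kappa>>0. \<forall>e>0. \<exists>y\<in>\<Omega>. dist y p < e \<and> dirderivs \<phi> [T,T] y \<le> -\<kappa>)"
      if "dirderivs \<rho> [T] p = 0" "dirderivs \<rho> [T,T] p > 0" for T
      by (rule chord[OF \<Omega>def sm d\<phi> d\<phi>1 c\<phi> z \<rho>p \<gamma> n\<nu> d that]) auto
    define T where "T = X0 - (X0 \<bullet> \<nu>) *\<^sub>R \<nu>"
    have nn: "\<nu> \<bullet> \<nu> = 1" using n\<nu> by (simp add: dot_square_norm)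
    have T0: "dirderivs \<rho> [T] p = 0"
    proof -
      have "gr \<bullet> T = norm gr * (\<nu> \<bullet> T)" using grnu by (metis inner_scaleR_left)
      also have "\<nu> \<bullet> T = 0" using nn by (simp add: T_def inner_diff_right inner_commute)
      finally show ?thesis using Dr by simp
    qed
    have GT: "Gh G p T = 0"
    proof (cases "T = 0")
      case True then show ?thesis by (simp add: Gh_zero)
    next
      case False
      have A: "\<forall>e>0. \<exists>y\<in>\<Omega>. dist y p < e \<and> dirderivs \<phi> [T] y = 0"
        using ch[OF T0 conv[OF \<rho>p False T0]] by blast
      have "Gh G p T \<le> 0"
        using contG1[of T] pcl
      proof (rule closed_limit)
        fix e :: real assume "e > 0"
        then obtain y where "y \<in> \<Omega>" "dist y p < e" "dirderivs \<phi> [T] y = 0" using A by blast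
        then show "\<exists>y\<in>closure \<Omega>. dist y p < e \<and> Gh G y T \<le> 0"
          using L1 closure_subset by fastforce
      qed
      moreover have "- Gh G p T \<le> 0"
        using continuous_on_minus[OF contG1[of T]] pcl
      proof (rule closed_limit)
        fix e :: real assume "e > 0"
        then obtain y where "y \<in> \<Omega>" "dist y p < e" "dirderivs \<phi> [T] y = 0" using A by blast
        then show "\<exists>y\<in>closure \<Omega>. dist y p < e \<and> - Gh G y T \<le> 0"
          using L1 closure_subset by fastforce
      qed
      ultimately show ?thesis by simp
    qed
    have "X0 = T + (X0 \<bullet> \<nu>) *\<^sub>R \<nu>" by (simp add: T_def)
    then have "Gh G p X0 = Gh G p T + (X0 \<bullet> \<nu>) * Gh G p \<nu>"
      by (metis Gh_add Gh_scale)
    then have "(X0 \<bullet> \<nu>) * d = 0" using G0 GT Gnu by simp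
    then have "X0 \<bullet> \<nu> = 0" using d(1) by simp
    then have TX: "T = X0" by (simp add: T_def)
    have X0nz: "X0 \<noteq> 0" using X0 by auto
    obtain \<kappa> where \<kappa>: "\<kappa> > 0" "\<forall>e>0. \<exists>y\<in>\<Omega>. dist y p < e \<and> dirderivs \<phi> [X0,X0] y \<le> -\<kappa>"
      using ch[of X0] T0 conv[OF \<rho>p X0nz] TX by auto
    have "Hh H p X0 \<le> -\<kappa>"
      using contH1[of X0] pcl
    proof (rule closed_limit)
      fix e :: real assume "e > 0"
      then obtain y where "y \<in> \<Omega>" "dist y p < e" "dirderivs \<phi> [X0,X0] y \<le> -\<kappa>" using \<kappa> by blast
      then show "\<exists>y\<in>closure \<Omega>. dist y p < e \<and> Hh H y X0 \<le> -\<kappa>"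
        using L2 closure_subset by fastforce
    qed
    then show ?thesis using \<kappa> by simp
  qed
  have compK: "compact (closure \<Omega> \<times> sphere (0::'a) 1)"
    using bdd by (intro compact_Times compact_sphere) (simp add: compact_eq_bounded_closed bounded_closure)
  have C: "\<exists>k::nat. \<forall>x\<in>\<Omega>. \<forall>X. norm X = 1 \<longrightarrow> \<phi> x < inverse (real (Suc k)) \<longrightarrow>
       \<phi> x * inverse (real (Suc k)) \<le> (Gh G x X)\<^sup>2 - \<phi> x * Hh H x X"
  proof (rule ccontr)
    assume neg: "\<not> ?thesis"
    have "\<forall>k. \<exists>z. fst z \<in> \<Omega> \<and> norm (snd z) = 1 \<and> \<phi> (fst z) < inverse (real (Suc k)) \<and>
       (Gh G (fst z) (snd z))\<^sup>2 - \<phi> (fst z) * Hh H (fst z) (snd z) < \<phi> (fst z) * inverse (real (Suc k))"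
    proof
      fix k
      obtain x X where "x \<in> \<Omega>" "norm X = 1" "\<phi> x < inverse (real (Suc k))"
        "(Gh G x X)\<^sup>2 - \<phi> x * Hh H x X < \<phi> x * inverse (real (Suc k))"
        using neg[simplified not_ex, rule_format, of k] by (auto simp: not_le)
      then show "\<exists>z. fst z \<in> \<Omega> \<and> norm (snd z) = 1 \<and> \<phi> (fst z) < inverse (real (Suc k)) \<and>
       (Gh G (fst z) (snd z))\<^sup>2 - \<phi> (fst z) * Hh H (fst z) (snd z) < \<phi> (fst z) * inverse (real (Suc k))"
        by (intro exI[of _ "(x, X)"]) simp
    qed
    then obtain s where s: "\<And>k. fst (s k) \<in> \<Omega>" "\<And>k. norm (snd (s k)) = 1"
      "\<And>k. \<phi> (fst (s k)) < inverse (real (Suc k))"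
      "\<And>k. (Gh G (fst (s k)) (snd (s k)))\<^sup>2 - \<phi> (fst (s k)) * Hh H (fst (s k)) (snd (s k))
              < \<phi> (fst (s k)) * inverse (real (Suc k))"
      by metis
    have sK: "\<forall>k. s k \<in> closure \<Omega> \<times> sphere 0 1"
      using s(1,2) closure_subset by (auto simp: mem_Times_iff)
    obtain l r where l: "l \<in> closure \<Omega> \<times> sphere 0 1" and r: "strict_mono r" and lim: "(s \<circ> r) \<longlonglongrightarrow> l"
      using seq_compactE[OF compact_imp_seq_compact[OF compK] sK] by blast
    obtain p X0 where lp: "l = (p, X0)" by (cases l)
    define y where "y = (\<lambda>k. fst (s (r k)))"
    define Y where "Y = (\<lambda>k. snd (s (r k)))"
    define iv where "iv = (\<lambda>k. inverse (real (Suc (r k))))"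
    have yO: "y k \<in> \<Omega>" for k using s(1) by (simp add: y_def)
    have pcl: "p \<in> closure \<Omega>" and X0: "norm X0 = 1" using l lp by auto
    have ylim: "y \<longlonglongrightarrow> p" using tendsto_fst[OF lim] lp by (simp add: y_def o_def)
    have Ylim: "Y \<longlonglongrightarrow> X0" using tendsto_snd[OF lim] lp by (simp add: Y_def o_def)
    have ivlim: "iv \<longlonglongrightarrow> 0"
      using LIMSEQ_subseq_LIMSEQ[OF LIMSEQ_inverse_real_of_nat r] by (simp add: iv_def o_def)
    have evcl: "\<forall>\<^sub>F k in sequentially. y k \<in> closure \<Omega>"
      by (intro always_eventually allI) (use yO closure_subset in auto)
    have \<phi>lim: "(\<lambda>k. \<phi> (y k)) \<longlonglongrightarrow> \<phi> p"
      by (rule continuous_on_tendsto_compose[OF c\<phi> ylim pcl evcl])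
    have \<phi>y: "0 < \<phi> (y k)" "\<phi> (y k) < iv k" for k
      using pos yO s(3) by (auto simp: y_def iv_def)
    have "\<phi> p \<le> 0"
      by (rule tendsto_le[OF trivial_limit_sequentially ivlim \<phi>lim]) (intro always_eventually allI less_imp_le \<phi>y)
    moreover have "\<phi> p \<ge> 0"
      by (rule tendsto_le[OF trivial_limit_sequentially \<phi>lim tendsto_const]) (intro always_eventually allI less_imp_le \<phi>y)
    ultimately have \<phi>p: "\<phi> p = 0" by simp
    have pn: "p \<notin> \<Omega>" using pos \<phi>p by auto
    have evK: "\<forall>\<^sub>F k in sequentially. (y k, Y k) \<in> closure \<Omega> \<times> UNIV"
      by (intro always_eventually allI) (use yO closure_subset in auto)
    have yY: "(\<lambda>k. (y k, Y k)) \<longlonglongrightarrow> (p, X0)" by (intro tendsto_Pair ylim Ylim)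
    have Glim: "(\<lambda>k. Gh G (y k) (Y k)) \<longlonglongrightarrow> Gh G p X0"
      using continuous_on_tendsto_compose[OF contG yY _ evK] pcl by simp
    have Hlim: "(\<lambda>k. Hh H (y k) (Y k)) \<longlonglongrightarrow> Hh H p X0"
      using continuous_on_tendsto_compose[OF contH yY _ evK] pcl by simp
    have ineq: "(Gh G (y k) (Y k))\<^sup>2 < \<phi> (y k) * (Hh H (y k) (Y k) + iv k)" for k
      using s(4)[of "r k"] by (simp add: y_def Y_def iv_def algebra_simps)
    have RHSlim: "(\<lambda>k. \<phi> (y k) * (Hh H (y k) (Y k) + iv k)) \<longlonglongrightarrow> \<phi> p * (Hh H p X0 + 0)"
      by (intro tendsto_intros \<phi>lim Hlim ivlim)
    have G2lim: "(\<lambda>k. (Gh G (y k) (Y k))\<^sup>2) \<longlonglongrightarrow> (Gh G p X0)\<^sup>2"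
      by (intro tendsto_intros Glim)
    have "(Gh G p X0)\<^sup>2 \<le> \<phi> p * (Hh H p X0 + 0)"
      by (rule tendsto_le[OF trivial_limit_sequentially RHSlim G2lim]) (intro always_eventually allI less_imp_le ineq)
    then have "(Gh G p X0)\<^sup>2 \<le> 0" using \<phi>p by simp
    then have G0: "Gh G p X0 = 0" by simp
    have Hneg: "Hh H p X0 < 0" by (rule bd[OF pcl pn X0 G0])
    have HLim2: "(\<lambda>k. Hh H (y k) (Y k) + iv k) \<longlonglongrightarrow> Hh H p X0 + 0"
      by (intro tendsto_intros Hlim ivlim)
    have "\<forall>\<^sub>F k in sequentially. Hh H (y k) (Y k) + iv k < 0"
      using order_tendstoD(2)[OF HLim2] Hneg by simp
    then obtain N where "Hh H (y N) (Y N) + iv N < 0" by (auto simp: eventually_sequentially)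
    then have "\<phi> (y N) * (Hh H (y N) (Y N) + iv N) < 0" using \<phi>y(1)[of N] by (simp add: mult_pos_neg)
    moreover have "(Gh G (y N) (Y N))\<^sup>2 \<ge> 0" by simp
    ultimately show False using ineq[of N] by linarith
  qed
  then obtain k :: nat where k: "\<And>x X. x \<in> \<Omega> \<Longrightarrow> norm X = 1 \<Longrightarrow> \<phi> x < inverse (real (Suc k)) \<Longrightarrow>
       \<phi> x * inverse (real (Suc k)) \<le> (Gh G x X)\<^sup>2 - \<phi> x * Hh H x X"
    by blast
  define c where "c = inverse (real (Suc k))"
  have c0: "c > 0" by (simp add: c_def)
  show ?thesis
  proof (intro exI[of _ c] conjI c0 ballI allI impI)
    fix x X assume xO: "x \<in> \<Omega>" and small: "\<phi> x < c"
    have px: "\<phi> x > 0" using pos xO by simp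
    have eqD: "dirderivs (\<lambda>y. - ln (\<phi> y)) [X, X] x = ((Gh G x X)\<^sup>2 - \<phi> x * Hh H x X) / (\<phi> x)\<^sup>2"
      using ln_second[OF openO xO _ d\<phi> d\<phi>1, of X] pos L1[OF xO] L2[OF xO] by simp
    have key: "\<phi> x * c * (norm X)\<^sup>2 \<le> (Gh G x X)\<^sup>2 - \<phi> x * Hh H x X"
    proof (cases "X = 0")
      case True then show ?thesis by (simp add: Gh_zero Hh_zero)
    next
      case False
      define U where "U = inverse (norm X) *\<^sub>R X"
      have nU: "norm U = 1" using False by (simp add: U_def)
      have XU: "X = norm X *\<^sub>R U" using False by (simp add: U_def)
      have "\<phi> x * c \<le> (Gh G x U)\<^sup>2 - \<phi> x * Hh H x U" using k[OF xO nU] small by (simp add: c_def)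
      then have "\<phi> x * c * (norm X)\<^sup>2 \<le> ((Gh G x U)\<^sup>2 - \<phi> x * Hh H x U) * (norm X)\<^sup>2"
        by (rule mult_right_mono) simp
      also have "\<dots> = (Gh G x X)\<^sup>2 - \<phi> x * Hh H x X"
        by (subst (1 2) XU, simp only: Gh_scale Hh_scale) (simp add: algebra_simps power2_eq_square)
      finally show ?thesis .
    qed
    have "c * (norm X)\<^sup>2 / \<phi> x = \<phi> x * c * (norm X)\<^sup>2 / (\<phi> x)\<^sup>2"
      using px by (simp add: power2_eq_square field_simps)
    also have "\<dots> \<le> ((Gh G x X)\<^sup>2 - \<phi> x * Hh H x X) / (\<phi> x)\<^sup>2"
      using key by (rule divide_right_mono) simp
    finally show "c * (norm X)\<^sup>2 / \<phi> x \<le> dirderivs (\<lambda>y. - ln (\<phi> y)) [X, X] x" using eqD by simp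
  qed
qed


end
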